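(* Let $A,B>0$, $Q=A/B$, $rec$ real, $\epsilon_0 = 1-B\cdot rec$, let $k\ge1$ and let $n_i,d_i,f_i$ be real numbers. Define $N_0 = A\cdot rec - n_0$, $D_0 = B\cdot rec - d_0$, $F_i = 2-D_i-f_i$, and for $i\ge1$: $N_i = N_{i-1}F_{i-1}-n_i$, $D_i = D_{i-1}F_{i-1}-d_i$. Define $\epsilon'_0 = \epsilon_0+d_0$ and $\epsilon'_i = (\epsilon'_{i-1})^2 + (1-\epsilon'_{i-1})f_{i-1} + d_i$ for $i\ge1$. Then for all $i\ge0$, $D_i = 1-\epsilon'_i$, $F_i = 1+\epsilon'_i - f_i$, and $$N_i = Q(1-\epsilon'_i) + \sum_{j=0}^{i}(Qd_j - n_j)\prod_{l=j}^{i-1}F_l .$$ In particular the final numerator satisfies $$N_k = Q\bigl(1-(\epsilon'_{k-1})^2\bigr) - Qf_{k-1}(1-\epsilon'_{k-1}) + \sum_{j=0}^{k-1}(Qd_j-n_j)\prod_{l=j}^{k-1}F_l \;-\; n_k,$$ so that $N_k - Q$ equals the convergent error term $-Q(\epsilon'_{k-1})^2$ plus the accumulative error term $\sum_{j=0}^{k-1}(Qd_j-n_j)\prod_{l=j}^{k-1}F_l - n_k - Qf_{k-1}(1-\epsilon'_{k-1})$. (Empty products equal $1$.)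
   Context: Goldschmidt division of $Q=A/B$ with $k$ iterations in which numerator, denominator and iterative factor are all computed inexactly: $n_i$, $d_i$, $f_i$ are the errors (truncation errors, nonnegative in the paper) on $N_i$, $D_i$, $F_i$ respectively, and $rec$ is an approximate reciprocal of $B$ with relative error $\epsilon_0$. *)

theory Defs
  imports Complex_Main
begin

end

theory Submission
  imports Defs
begin

theorem mainTheorem6:
  fixes A B Q rec eps0 :: real and k :: nat
    and n d f N D F eps' :: "nat \<Rightarrow> real"
  assumes "A > 0" and "B > 0" and "Q = A / B"
    and "eps0 = 1 - B * rec" and "k \<ge> 1"
    and "N 0 = A * rec - n 0"
    and "D 0 = B * rec - d 0"
    and "\<And>i. F i = 2 - D i - f i"
    and "\<And>i. N (Suc i) = N i * F i - n (Suc i)"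
    and "\<And>i. D (Suc i) = D i * F i - d (Suc i)"
    and "eps' 0 = eps0 + d 0"
    and "\<And>i. eps' (Suc i) = (eps' i)\<^sup>2 + (1 - eps' i) * f i + d (Suc i)"
  shows "(\<forall>i. D i = 1 - eps' i
            \<and> F i = 1 + eps' i - f i
            \<and> N i = Q * (1 - eps' i)
                    + (\<Sum>j\<in>{0..i}. (Q * d j - n j) * (\<Prod>l\<in>{j..<i}. F l)))
       \<and> N k = Q * (1 - (eps' (k - 1))\<^sup>2) - Q * f (k - 1) * (1 - eps' (k - 1))
               + (\<Sum>j\<in>{0..<k}. (Q * d j - n j) * (\<Prod>l\<in>{j..<k}. F l)) - n k
       \<and> N k - Q = - Q * (eps' (k - 1))\<^sup>2
               + ((\<Sum>j\<in>{0..<k}. (Q * d j - n j) * (\<Prod>l\<in>{j..<k}. F l)) - n k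
                  - Q * f (k - 1) * (1 - eps' (k - 1)))"
proof -
  note a = assms
  have DF: "D i = 1 - eps' i" for i
  proof (induction i)
    case 0 show ?case using a(2,4,7,11) by (simp add: field_simps)
  next
    case (Suc i)
    have "D (Suc i) = (1 - eps' i) * (1 + eps' i - f i) - d (Suc i)"
      using Suc a(8)[of i] a(10)[of i] by simp
    then show ?case using a(12)[of i] by (simp add: power2_eq_square algebra_simps)
  qed
  have FF: "F i = 1 + eps' i - f i" for i using DF a(8) by simp
  have QB: "A * rec = Q * (B * rec)" using a(2,3) by simp
  have NN: "N i = Q * (1 - eps' i)
                    + (\<Sum>j\<in>{0..i}. (Q * d j - n j) * (\<Prod>l\<in>{j..<i}. F l))" for i
  proof (induction i)
    case 0
    have "N 0 = Q * (1 - eps0) - n 0" using a(4,6) QB by simp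
    then show ?case using a(11) by (simp add: algebra_simps)
  next
    case (Suc i)
    have s: "(\<Sum>j\<in>{0..Suc i}. (Q * d j - n j) * (\<Prod>l\<in>{j..<Suc i}. F l))
      = (\<Sum>j\<in>{0..i}. (Q * d j - n j) * (\<Prod>l\<in>{j..<i}. F l)) * F i + (Q * d (Suc i) - n (Suc i))"
      by (simp add: sum_distrib_right mult.assoc prod.atLeastLessThan_Suc)
    show ?case unfolding a(9) Suc s FF[of i] a(12)[of i]
      by (simp add: power2_eq_square algebra_simps)
  qed
  obtain m where m: "k = Suc m" using a(5) by (cases k) auto
  have s2: "(\<Sum>j\<in>{0..<k}. (Q * d j - n j) * (\<Prod>l\<in>{j..<k}. F l))
      = (\<Sum>j\<in>{0..m}. (Q * d j - n j) * (\<Prod>l\<in>{j..<m}. F l)) * F m"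
    unfolding m sum_distrib_right mult.assoc atLeastLessThanSuc_atLeastAtMost[symmetric]
    by (intro sum.cong) (auto simp: prod.atLeastLessThan_Suc)
  have Nk: "N k = Q * (1 - (eps' (k - 1))\<^sup>2) - Q * f (k - 1) * (1 - eps' (k - 1))
               + (\<Sum>j\<in>{0..<k}. (Q * d j - n j) * (\<Prod>l\<in>{j..<k}. F l)) - n k"
    unfolding s2 unfolding m a(9)[of m] NN[of m] FF[of m]
    by (simp add: power2_eq_square algebra_simps)
  show ?thesis using DF FF NN Nk by (simp add: algebra_simps)
qed

end
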